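(* In the setting described in the context, assume the Weyl tensor satisfies $|W|_g\leq\varepsilon$ on $M$ for some constant $0<\varepsilon\leq T=2\sqrt6$, assume $\phi_1(0)<1$, $\phi_1(0)\phi_2(0)<1$ and $1<\phi_1(0)+\phi_1(0)\phi_2(0)$, and assume there is $\delta_0\in(0,1)$ with $\phi_1(0),\phi_2(0)\geq\delta_0$. Then there is a constant $C=C(\delta_0)$ such that for $k=1,2$, $i=2,3$ and all $x\in[\frac34,1]$: $|y_1^{(k)}(x)|\leq C\varepsilon^2(1-x^2)^{4-k}$ and $|y_i^{(k)}(x)|\leq C\varepsilon(1-x^2)^{2-k}$.
   Context: Setting: $(M^4,g)$ is a Hadamard manifold (complete, simply connected, non-positive sectional curvature) which is conformally compact Einstein ($\mathrm{Ric}_g=-3g$, and $x^2g$ extends continuously to $\overline M$ for a boundary defining function $x$) with conformal infinity $(\mathbb{S}^3,[\hat g])$, $\hat g=\lambda_1\sigma_1^2+\lambda_2\sigma_2^2+\lambda_3\sigma_3^2$, where $\sigma_i$ are the standard left-invariant $1$-forms on $\mathrm{SU}(2)\cong\mathbb{S}^3$ and $\lambda_1,\lambda_2,\lambda_3>0$ are pairwise distinct. The conformal Killing fields of $\hat g$ extend to Killing fields of $g$ with a common fixed point $p_0\in M$; with $r$ the distance to $p_0$, $x=e^{-r}$ is a geodesic defining function, and along a geodesic ray $\theta=\theta_0$ from $p_0$, in polar coordinates $(x,\theta)$ with $d\theta^i=\sigma_i$ at $\theta_0$, $g=x^{-2}\big(dx^2+\tfrac{(1-x^2)^2}{4}\bar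 h\big)$, $\bar h=\sum_i I_i(d\theta^i)^2$, $I_i\in C^\infty([0,1])$ positive, $I_i(1)=1$. Set $K=I_1I_2I_3$, $\phi_1=I_2/I_1$, $\phi_2=I_3/I_2$, $y_1=\log K$, $y_2=\log\phi_1$, $y_3=\log\phi_2$. Then $K(0)<1$ and on $[0,1]$: $y_1''-x^{-1}(1+3x^2)(1-x^2)^{-1}y_1'+\frac16(y_1')^2+\frac13[(y_2')^2+y_2'y_3'+(y_3')^2]=0$; $y_1''-x^{-1}(5+7x^2)(1-x^2)^{-1}y_1'+\frac12(y_1')^2+16(1-x^2)^{-2}(3-\Upsilon)=0$ with $\Upsilon=K^{-1/3}[2(\phi_1^2\phi_2)^{1/3}+2(\phi_1^{-1}\phi_2)^{1/3}+2(\phi_1\phi_2^2)^{-1/3}-\phi_1^{-4/3}\phi_2^{-2/3}-\phi_1^{2/3}\phi_2^{-2/3}-\phi_1^{2/3}\phi_2^{4/3}]$; $y_2''-2x^{-1}(1+2x^2)(1-x^2)^{-1}y_2'+\frac12y_1'y_2'+32(1-x^2)^{-2}K^{-1/3}[\phi_1^{2/3}\phi_2^{1/3}-\phi_1^{-1/3}\phi_2^{1/3}-\phi_1^{2/3}\phi_2^{-2/3}+\phi_1^{-4/3}\phi_2^{-2/3}]=0$; $y_3''-2x^{-1}(1+2x^2)(1-x^2)^{-1}y_3'+\frac12y_1'y_3'+32(1-x^2)^{-2}K^{-1/3}[\phi_1^{-1/3}\phi_2^{1/3}-\phi_1^{-1/3}\phi_2^{-2/3}-\phi_1^{2/3}\phi_2^{4/3}+\phi_1^{2/3}\phi_2^{-2/3}]=0$;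 boundary conditions $\phi_1(0)=\lambda_2/\lambda_1$, $\phi_2(0)=\lambda_3/\lambda_2$, $K(1)=\phi_1(1)=\phi_2(1)=1$, $y_i'(0)=y_i'(1)=0$. $|W|_g$ denotes the pointwise norm of the Weyl tensor of $g$. *)

theory Defs
  imports "HOL-Analysis.Analysis"
begin

text \<open>Cohomogeneity-one (diagonal Bianchi IX) ansatz:
  g = x^-2 (dx^2 + (1-x^2)^2/4 * (I1 s1^2 + I2 s2^2 + I3 s3^2)),
  s_i the standard left-invariant 1-forms on SU(2), d s_i = 2 s_j /\ s_k (cyclic).
  Orthonormal frame: E0 = x d/dx, E_i = X_i / a_i, a_i = (1-x^2)/(2x) sqrt(I_i),
  X_i dual to s_i, so [X_j,X_k] = -2 eps_ijk X_i.\<close>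

definition Ivec :: "(real \<Rightarrow> real) \<Rightarrow> (real \<Rightarrow> real) \<Rightarrow> (real \<Rightarrow> real) \<Rightarrow> nat \<Rightarrow> real \<Rightarrow> real" where
  "Ivec I1 I2 I3 i = (if i = 1 then I1 else if i = 2 then I2 else I3)"

definition warp :: "(nat \<Rightarrow> real \<Rightarrow> real) \<Rightarrow> nat \<Rightarrow> real \<Rightarrow> real" where
  "warp I i x = (1 - x^2) / (2 * x) * sqrt (I i x)"

definition levi :: "nat \<Rightarrow> nat \<Rightarrow> nat \<Rightarrow> real" where
  "levi i j k = (if (i,j,k) \<in> {(1,2,3),(2,3,1),(3,1,2)} then 1
                 else if (i,j,k) \<in> {(1,3,2),(3,2,1),(2,1,3)} then -1 else 0)"

text \<open>Structure functions: [E_a,E_b] = sum_c (frameC I a b c x) E_c.\<close>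
definition frameC :: "(nat \<Rightarrow> real \<Rightarrow> real) \<Rightarrow> nat \<Rightarrow> nat \<Rightarrow> nat \<Rightarrow> real \<Rightarrow> real" where
  "frameC I a b c x =
     (if a = 0 \<and> b \<in> {1,2,3} \<and> c = b then - x * deriv (warp I b) x / warp I b x
      else if b = 0 \<and> a \<in> {1,2,3} \<and> c = a then x * deriv (warp I a) x / warp I a x
      else if a \<in> {1,2,3} \<and> b \<in> {1,2,3} \<and> c \<in> {1,2,3}
        then -2 * levi c a b * warp I c x / (warp I a x * warp I b x)
      else 0)"

text \<open>Connection coefficients g(nabla_{E_a} E_b, E_c) (Koszul formula).\<close>
definition Gam :: "(nat \<Rightarrow> real \<Rightarrow> real) \<Rightarrow> nat \<Rightarrow> nat \<Rightarrow> nat \<Rightarrow> real \<Rightarrow> real" where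
  "Gam I a b c x = (frameC I a b c x - frameC I b c a x + frameC I c a b x) / 2"

definition Eact :: "nat \<Rightarrow> (real \<Rightarrow> real) \<Rightarrow> real \<Rightarrow> real" where
  "Eact a f x = (if a = 0 then x * deriv f x else 0)"

text \<open>Riem a b c d = g(R(E_a,E_b)E_c, E_d), R(X,Y) = [nabla_X, nabla_Y] - nabla_[X,Y].\<close>
definition Riem :: "(nat \<Rightarrow> real \<Rightarrow> real) \<Rightarrow> nat \<Rightarrow> nat \<Rightarrow> nat \<Rightarrow> nat \<Rightarrow> real \<Rightarrow> real" where
  "Riem I a b c d x =
     Eact a (Gam I b c d) x - Eact b (Gam I a c d) x
     + (\<Sum>e<4. Gam I b c e x * Gam I a e d x - Gam I a c e x * Gam I b e d x)
     - (\<Sum>e<4. frameC I a b e x * Gam I e c d x)"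

definition Ricc :: "(nat \<Rightarrow> real \<Rightarrow> real) \<Rightarrow> nat \<Rightarrow> nat \<Rightarrow> real \<Rightarrow> real" where
  "Ricc I b c x = (\<Sum>a<4. Riem I a b c a x)"

definition Scal :: "(nat \<Rightarrow> real \<Rightarrow> real) \<Rightarrow> real \<Rightarrow> real" where
  "Scal I x = (\<Sum>b<4. Ricc I b b x)"

definition kd :: "nat \<Rightarrow> nat \<Rightarrow> real" where
  "kd a b = (if a = b then 1 else 0)"

definition Weyl :: "(nat \<Rightarrow> real \<Rightarrow> real) \<Rightarrow> nat \<Rightarrow> nat \<Rightarrow> nat \<Rightarrow> nat \<Rightarrow> real \<Rightarrow> real" where
  "Weyl I a b c d x = Riem I a b c d x
     - (Ricc I a d x * kd b c + Ricc I b c x * kd a d - Ricc I a c x * kd b d - Ricc I b d x * kd a c) / 2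
     + Scal I x / 6 * (kd a d * kd b c - kd a c * kd b d)"

definition weyl_norm :: "(nat \<Rightarrow> real \<Rightarrow> real) \<Rightarrow> real \<Rightarrow> real" where
  "weyl_norm I x = sqrt (\<Sum>a<4. \<Sum>b<4. \<Sum>c<4. \<Sum>d<4. (Weyl I a b c d x)^2)"

definition nonpos_sec :: "(nat \<Rightarrow> real \<Rightarrow> real) \<Rightarrow> real \<Rightarrow> bool" where
  "nonpos_sec I x \<longleftrightarrow> (\<forall>u v :: nat \<Rightarrow> real.
      (\<Sum>a<4. \<Sum>b<4. \<Sum>c<4. \<Sum>d<4. u a * v b * v c * u d * Riem I a b c d x) \<le> 0)"

definition smooth_fun :: "(real \<Rightarrow> real) \<Rightarrow> bool" where
  "smooth_fun f \<longleftrightarrow> (\<forall>k x. ((deriv ^^ k) f) differentiable (at x))"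

definition Kf :: "(real \<Rightarrow> real) \<Rightarrow> (real \<Rightarrow> real) \<Rightarrow> (real \<Rightarrow> real) \<Rightarrow> real \<Rightarrow> real" where
  "Kf I1 I2 I3 x = I1 x * I2 x * I3 x"

definition phi1 :: "(real \<Rightarrow> real) \<Rightarrow> (real \<Rightarrow> real) \<Rightarrow> real \<Rightarrow> real" where
  "phi1 I1 I2 x = I2 x / I1 x"

definition phi2 :: "(real \<Rightarrow> real) \<Rightarrow> (real \<Rightarrow> real) \<Rightarrow> real \<Rightarrow> real" where
  "phi2 I2 I3 x = I3 x / I2 x"

definition Ups :: "real \<Rightarrow> real \<Rightarrow> real \<Rightarrow> real" where
  "Ups K p1 p2 = K powr (-1/3) *
     (2 * (p1^2 * p2) powr (1/3) + 2 * (p2 / p1) powr (1/3) + 2 * (p1 * p2^2) powr (-1/3)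
      - p1 powr (-4/3) * p2 powr (-2/3) - p1 powr (2/3) * p2 powr (-2/3)
      - p1 powr (2/3) * p2 powr (4/3))"

end

theory Submission
  imports Defs
begin


lemma smooth_D0: "smooth_fun f \<Longrightarrow> (f has_real_derivative deriv f x) (at x)"
  unfolding smooth_fun_def
  by (metis DERIV_deriv_iff_real_differentiable funpow_0)

lemma smooth_D1: "smooth_fun f \<Longrightarrow> (deriv f has_real_derivative deriv (deriv f) x) (at x)"
  unfolding smooth_fun_def
  by (metis DERIV_deriv_iff_real_differentiable funpow_0 funpow_Suc_right o_apply One_nat_def)

lemma smooth_cont2: "smooth_fun f \<Longrightarrow> isCont (deriv (deriv f)) x"
  unfolding smooth_fun_def
  by (metis differentiable_imp_continuous_within funpow_0 funpow_Suc_right o_apply numeral_2_eq_2)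

lemma w_deriv:
  fixes J :: "real \<Rightarrow> real"
  assumes t: "0 < t" "t < 1" and J: "J t > 0" "(J has_real_derivative J') (at t)"
  shows "((\<lambda>s. (1-s^2)/(2* s)* sqrt(J s)) has_real_derivative
      (-(1+t^2)/(2*t^2) * sqrt(J t) + (1-t^2)/(2*t) * (J' / (2* sqrt(J t))))) (at t)"
proof -
  have "((\<lambda>s. (1-s^2)/(2* s)) has_real_derivative -(1+t^2)/(2*t^2)) (at t)"
    using t by (auto intro!: derivative_eq_intros simp: field_simps power2_eq_square)
  moreover have "((\<lambda>s. sqrt (J s)) has_real_derivative (J' / (2* sqrt(J t)))) (at t)"
    using J by (auto intro!: derivative_eq_intros simp: field_simps)
  ultimately show ?thesis by (rule DERIV_mult[THEN DERIV_cong]) (simp add: algebra_simps)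
qed

lemma h_eq:
  fixes J :: "real \<Rightarrow> real"
  assumes t: "0 < t" "t < 1" and J: "J t > 0" "(J has_real_derivative J') (at t)"
  shows "t * deriv (\<lambda>s. (1-s^2)/(2* s)* sqrt(J s)) t / ((1-t^2)/(2*t)* sqrt(J t))
      = -(1+t^2)/(1-t^2) + t * (J' / (2 * J t))"
proof -
  have d: "deriv (\<lambda>s. (1-s^2)/(2* s)* sqrt(J s)) t = -(1+t^2)/(2*t^2) * sqrt(J t) + (1-t^2)/(2*t) * (J' / (2* sqrt(J t)))"
    using w_deriv[OF assms] by (rule DERIV_imp_deriv)
  define q where "q = sqrt (J t)"
  have s: "q > 0" using J by (simp add: q_def)
  have ss: "J t = q^2" using J by (simp add: q_def)
  have "1 - t^2 > 0" using t by (simp add: power_less_one_iff abs_less_iff) 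
  then have "1 - t^2 \<noteq> 0" by simp
  then show ?thesis unfolding d q_def[symmetric] ss using s t
    by (simp add: field_simps power2_eq_square)
qed

lemma mvt_real:
  fixes f :: "real \<Rightarrow> real"
  assumes "a < b" and "\<And>x. x \<in> {a..b} \<Longrightarrow> (f has_real_derivative f' x) (at x)"
  shows "\<exists>\<xi>. a < \<xi> \<and> \<xi> < b \<and> f b - f a = f' \<xi> * (b - a)"
proof -
  have c: "continuous_on {a..b} f"
    using assms(2) by (meson DERIV_isCont continuous_at_imp_continuous_on)
  have "\<And>x. a < x \<Longrightarrow> x < b \<Longrightarrow> f differentiable (at x)"
    by (meson assms(2) atLeastAtMost_iff less_imp_le real_differentiable_def)
  from MVT[OF assms(1) c this] obtain l z where "a < z" "z < b" "DERIV f z :> l" "f b - f a = (b - a) * l"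
    by blast
  moreover have "l = f' z" using assms(2)[of z] \<open>a<z\<close> \<open>z<b\<close> \<open>DERIV f z :> l\<close> DERIV_unique by fastforce
  ultimately show ?thesis by (auto simp: mult.commute)
qed

lemma Gam_i0i:
  assumes "i \<in> {1,2,3::nat}"
  shows "Gam I i 0 i = (\<lambda>t. t * deriv (warp I i) t / warp I i t)"
  using assms by (auto simp: Gam_def frameC_def fun_eq_iff)

lemma Riem_0i0i:
  assumes "i \<in> {1,2,3::nat}"
  shows "Riem I 0 i 0 i x = x * deriv (Gam I i 0 i) x + (x * deriv (warp I i) x / warp I i x)^2"
  using assms
  apply (simp add: Riem_def Eact_def eval_nat_numeral)
  apply (auto simp: Gam_def frameC_def levi_def power2_eq_square)
  done

lemma Weyl_0i0i:
  assumes "i \<in> {1,2,3::nat}" and ric: "\<forall>b<4. \<forall>c<4. Ricc I b c x = -3 * kd b c"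
  shows "Weyl I 0 i 0 i x = Riem I 0 i 0 i x - 1"
proof -
  have sc: "Scal I x = -12" using ric by (simp add: Scal_def eval_nat_numeral kd_def)
  have "i < 4" using assms by auto
  then show ?thesis using assms(1) ric sc by (auto simp: Weyl_def kd_def)
qed

lemma weyl_norm_ge:
  assumes "a < 4" "b < 4" "c < 4" "d < 4"
  shows "\<bar>Weyl I a b c d x\<bar> \<le> weyl_norm I x"
proof -
  let ?W = "\<lambda>a b c d. (Weyl I a b c d x)^2"
  have "?W a b c d \<le> (\<Sum>d<4. ?W a b c d)" by (rule member_le_sum) (use assms in auto)
  also have "\<dots> \<le> (\<Sum>c<4. \<Sum>d<4. ?W a b c d)"
    by (rule member_le_sum[where f="\<lambda>c. \<Sum>d<4. ?W a b c d"]) (use assms in \<open>auto intro!: sum_nonneg\<close>)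
  also have "\<dots> \<le> (\<Sum>b<4. \<Sum>c<4. \<Sum>d<4. ?W a b c d)"
    by (rule member_le_sum[where f="\<lambda>b. \<Sum>c<4. \<Sum>d<4. ?W a b c d"]) (use assms in \<open>auto intro!: sum_nonneg\<close>)
  also have "\<dots> \<le> (\<Sum>a<4. \<Sum>b<4. \<Sum>c<4. \<Sum>d<4. ?W a b c d)"
    by (rule member_le_sum[where f="\<lambda>a. \<Sum>b<4. \<Sum>c<4. \<Sum>d<4. ?W a b c d"]) (use assms in \<open>auto intro!: sum_nonneg\<close>)
  finally have "sqrt (?W a b c d) \<le> weyl_norm I x" unfolding weyl_norm_def by (rule real_sqrt_le_mono)
  then show ?thesis by simp
qed

lemma alg_id1:
  fixes x z zd r :: real
  assumes r: "r \<noteq> 0" and x2: "x^2 = 1 - r"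
  shows "x * (-4*x/r^2 + z + x * zd) + (-(1+x^2)/r + x * z)^2 - 1
     = x^2 * zd - x * (1 + 3*x^2) / r * z + x^2 * z^2"
proof -
  have "x * (-4*x/r^2 + z + x * zd) + (-(1+x^2)/r + x * z)^2 - 1 = 
     (x * (-4*x + r^2 * z + r^2 * x * zd) * r^2 + (-(1+x^2) + r * x * z)^2 * r^2 - r^4) / r^4"
    using r by (simp add: field_simps)
  also have "... = (x^2 * zd * r^4 - x * (1 + 3*x^2) * r^3 * z + x^2 * z^2 * r^4) / r^4"
    apply (rule arg_cong[where f="\<lambda>t. t / r^4"])
    using x2 by algebra
  also have "... = x^2 * zd - x * (1 + 3*x^2) / r * z + x^2 * z^2"
    using r by (simp add: field_simps) algebra
  finally show ?thesis .
qed

lemma alg_id: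
  fixes x z zd :: real
  assumes "1 - x^2 \<noteq> 0"
  shows "x * (-4*x/(1-x^2)^2 + z + x * zd) + (-(1+x^2)/(1-x^2) + x * z)^2 - 1
     = x^2 * zd - x * (1 + 3*x^2) / (1 - x^2) * z + x^2 * z^2"
  using alg_id1[of "1 - x^2" x z zd] assms by simp

lemma weyl_formula:
  fixes J :: "real \<Rightarrow> real" and x :: real
  assumes i: "i \<in> {1,2,3::nat}" and x: "0 < x" "x < 1" and J: "smooth_fun J" "\<forall>t\<in>{0<..<1}. J t > 0"
    and w: "warp I i = (\<lambda>s. (1-s^2)/(2 * s) * sqrt (J s))"
    and ric: "\<forall>b<4. \<forall>c<4. Ricc I b c x = -3 * kd b c"
  shows "Weyl I 0 i 0 i x = x^2 * ((deriv (deriv J) x * J x - (deriv J x)^2) / (2 * (J x)^2))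
            - x * (1 + 3*x^2) / (1 - x^2) * (deriv J x / (2 * J x)) + x^2 * (deriv J x / (2 * J x))^2"
proof -
  let ?z = "\<lambda>s. deriv J s / (2 * J s)"
  let ?zd = "(deriv (deriv J) x * J x - (deriv J x)^2) / (2 * (J x)^2)"
  let ?g = "\<lambda>t. -(1+t^2)/(1-t^2) + t * ?z t"
  have Jx: "J x > 0" using J x by auto
  have x2: "1 - x^2 > 0" using x by (simp add: power_less_one_iff abs_less_iff)
  have eq: "Gam I i 0 i t = ?g t" if "t \<in> {0<..<1}" for t
    unfolding Gam_i0i[OF i] w using h_eq[of t J "deriv J t"] that J smooth_D0[OF J(1)] by auto
  have zd: "(?z has_real_derivative ?zd) (at x)"
    using smooth_D0[OF J(1), of x] smooth_D1[OF J(1), of x] Jx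
    by (auto intro!: derivative_eq_intros simp: field_simps power2_eq_square)
  have gd: "(?g has_real_derivative (-4*x/(1-x^2)^2 + ?z x + x * ?zd)) (at x)"
  proof -
    have a: "((\<lambda>t. -(1+t^2)/(1-t^2)) has_real_derivative (-4*x/(1-x^2)^2)) (at x)"
      using x2 by (auto intro!: derivative_eq_intros simp: field_simps power2_eq_square)
    have b: "((\<lambda>t. t * ?z t) has_real_derivative (1 * ?z x + x * ?zd)) (at x)"
      using DERIV_mult[OF DERIV_ident zd] by (simp add: mult.commute)
    show ?thesis using DERIV_add[OF a b] by (simp add: algebra_simps)
  qed
  have "(Gam I i 0 i has_real_derivative (-4*x/(1-x^2)^2 + ?z x + x * ?zd)) (at x)"
    by (rule has_field_derivative_transform_within_open[OF gd, of "{0<..<1}"]) (use x eq in auto)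
  then have dG: "deriv (Gam I i 0 i) x = -4*x/(1-x^2)^2 + ?z x + x * ?zd" by (rule DERIV_imp_deriv)
  have h: "x * deriv (warp I i) x / warp I i x = ?g x"
    using eq[of x] x Gam_i0i[OF i] by (metis greaterThanLessThan_iff)
  show ?thesis
  proof -
    have n1: "1 - x^2 \<noteq> 0" using x2 by simp
    have n2: "J x \<noteq> 0" using Jx by simp
    show ?thesis
      unfolding Weyl_0i0i[OF i ric] Riem_0i0i[OF i] dG h
      by (rule alg_id[OF n1])
  qed
qed



lemma crossing:
  fixes d :: "real \<Rightarrow> real" and a c :: real
  assumes ac: "a < c" and cont: "continuous_on {a..c} d" and dc: "d c \<le> 0"
    and der: "\<And>t. t \<in> {a..<c} \<Longrightarrow> d t = 0 \<Longrightarrow> \<exists>D>0. (d has_real_derivative D) (at t)"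
    and endc: "\<And>a'. a \<le> a' \<Longrightarrow> a' < c \<Longrightarrow> \<not> (\<forall>t\<in>{a'..<c}. d t > 0)"
  shows "\<forall>t\<in>{a..c}. d t \<le> 0"
proof (rule ccontr)
  assume "\<not> ?thesis"
  then obtain x0 where x0: "x0 \<in> {a..c}" "d x0 > 0" by force
  have x0c: "x0 < c" using x0 dc by (metis atLeastAtMost_iff less_eq_real_def not_le)
  define Z where "Z = {x0..c} \<inter> d -` {0}"
  have cont0: "continuous_on {x0..c} d" using cont x0 by (auto elim: continuous_on_subset)
  have "closed Z" unfolding Z_def by (rule continuous_closed_preimage[OF cont0]) auto
  obtain z0 where z0: "x0 \<le> z0" "z0 \<le> c" "d z0 = 0"
    using IVT2'[of d c 0 x0, OF dc _ _ cont0] x0 x0c by auto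
  then have "Z \<noteq> {}" unfolding Z_def by auto
  moreover have bZ: "bdd_below Z" unfolding Z_def by (rule bdd_belowI[of _ x0]) auto
  ultimately have x1Z: "Inf Z \<in> Z" using \<open>closed Z\<close> closed_contains_Inf by blast
  define x1 where "x1 = Inf Z"
  have x1: "x0 \<le> x1" "x1 \<le> c" "d x1 = 0" using x1Z unfolding Z_def x1_def by auto
  have x01: "x0 < x1" using x1 x0 by (metis less_eq_real_def less_irrefl)
  have pos: "d t > 0" if t: "x0 \<le> t" "t < x1" for t
  proof (rule ccontr)
    assume "\<not> d t > 0"
    then have "d t \<le> 0" by simp
    have ct: "continuous_on {x0..t} d" using cont0 t x1 by (auto elim: continuous_on_subset)
    obtain u where u: "x0 \<le> u" "u \<le> t" "d u = 0"
      using IVT2'[of d t 0 x0, OF \<open>d t \<le> 0\<close> _ _ ct] x0 t by auto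
    then have "u \<in> Z" unfolding Z_def using t x1 by auto
    then have "x1 \<le> u" unfolding x1_def using bZ by (rule cInf_lower)
    then show False using u t by simp
  qed
  show False
  proof (cases "x1 < c")
    case True
    then have "x1 \<in> {a..<c}" using x1 x0 by auto
    from der[OF this x1(3)] obtain D where D: "D > 0" "(d has_real_derivative D) (at x1)" by blast
    from DERIV_pos_inc_left[OF D(2) D(1)] obtain \<delta> where \<delta>: "\<delta> > 0" "\<forall>h>0. h < \<delta> \<longrightarrow> d (x1 - h) < d x1" by blast
    define h where "h = min (\<delta>/2) ((x1 - x0)/2)"
    have h: "h > 0" "h < \<delta>" "h \<le> (x1 - x0)/2" using \<delta> x01 unfolding h_def by (auto simp: min_def)
    have "d (x1 - h) < 0" using \<delta>(2) h x1 by auto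
    moreover have "d (x1 - h) > 0" using pos[of "x1 - h"] h by auto
    ultimately show False by simp
  next
    case False
    then have "x1 = c" using x1 by simp
    then have "\<forall>t\<in>{x0..<c}. d t > 0" using pos by auto
    then show False using endc[of x0] x0 x0c by auto
  qed
qed



lemma arith_t:
  fixes t :: real assumes a: "3/4 \<le> t" "t < 1"
  shows "3 \<le> (1+3*t^2)/t" "(1+3*t^2)/t \<le> 5" "(1-t^2)^2 \<le> 1/5" "1/t^2 \<le> 2" "0 < 1 - t^2"
    "(1+3*t^2)/(t*(1-t^2)) * (1-t^2) = (1+3*t^2)/t" "(1+3*t^2)/(t*(1-t^2)) \<ge> 3"
proof -
  have t0: "t > 0" using a by simp
  have sq1: "t^2 < 1" using a t0 by (simp add: power_less_one_iff abs_less_iff)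
  have "(3/4::real)^2 \<le> t^2" using a by (intro power_mono) auto
  then have sq: "t^2 < 1" "t^2 \<ge> 9/16" using sq1 by (auto simp: power2_eq_square)
  have q: "0 \<le> (3*t - 3/2)^2" by simp
  then have "3 * t \<le> 1 + 3*t^2" by (simp add: power2_eq_square algebra_simps) 
  then show "3 \<le> (1+3*t^2)/t" using t0 by (simp add: le_divide_eq)
  have "t*t \<le> t*1" using a t0 by (intro mult_left_mono) auto
  then have "1 + 3*t^2 \<le> 5 * t" unfolding power2_eq_square using a by linarith
  then show "(1+3*t^2)/t \<le> 5" using t0 by (simp add: divide_le_eq)
  have u: "1 - t^2 \<le> 7/16" "0 < 1 - t^2" using sq by auto
  then have "(1-t^2)^2 \<le> (7/16)^2" by (intro power_mono) auto
  moreover have "(7/16::real)^2 = 49/256" by (simp add: power2_eq_square)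
  ultimately show "(1-t^2)^2 \<le> 1/5" by linarith
  show "1/t^2 \<le> 2" using sq by (simp add: divide_le_eq)
  show "0 < 1 - t^2" by (rule u(2))
  show "(1+3*t^2)/(t*(1-t^2)) * (1-t^2) = (1+3*t^2)/t" using u(2) t0 by simp
  have "(1+3*t^2)/(t*(1-t^2)) = ((1+3*t^2)/t) / (1-t^2)" by simp
  moreover have "((1+3*t^2)/t) / (1-t^2) \<ge> (1+3*t^2)/t"
  proof -
    have "(1+3*t^2)/t * (1-t^2) \<le> (1+3*t^2)/t" 
      using u \<open>3 \<le> (1+3*t^2)/t\<close> by (intro mult_left_le) auto
    then show ?thesis by (simp only: pos_le_divide_eq[OF u(2)])
  qed
  ultimately show "(1+3*t^2)/(t*(1-t^2)) \<ge> 3" using \<open>3 \<le> (1+3*t^2)/t\<close> by linarith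
qed

lemma zd_eq:
  fixes t z zd W :: real
  assumes "3/4 \<le> t" "t < 1" "t^2 * zd - t*(1+3*t^2)/(1-t^2) * z + t^2 * z^2 = W"
  shows "zd = W / t^2 + (1+3*t^2)/(t*(1-t^2)) * z - z^2"
proof -
  have t0: "t \<noteq> 0" using assms by simp
  have u: "1 - t^2 \<noteq> 0" using arith_t(5)[OF assms(1,2)] by simp
  have "t^2 * zd = W + t*(1+3*t^2)/(1-t^2) * z - t^2 * z^2" using assms(3) by simp
  then have "zd = (W + t*(1+3*t^2)/(1-t^2) * z - t^2 * z^2) / t^2" using t0 by (simp add: field_simps)
  also have "\<dots> = W / t^2 + (1+3*t^2)/(t*(1-t^2)) * z - z^2" using t0 u
    by (simp add: field_simps power2_eq_square)
  finally show ?thesis .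
qed

lemma lin5:
  fixes a b c d zd w B :: real
  shows "a \<le> b \<Longrightarrow> c \<le> a \<Longrightarrow> c = d/2 \<Longrightarrow> B*3 \<le> d \<Longrightarrow> zd = w + b \<Longrightarrow> -B \<le> w \<and> w \<le> B \<Longrightarrow> 0 < B \<Longrightarrow> B \<le> 10 \<Longrightarrow> zd > 0"
  by linarith

lemma barrier:
  fixes z zd W :: "real \<Rightarrow> real" and \<epsilon> :: real
  assumes eps: "0 < \<epsilon>" "\<epsilon> \<le> 5"
    and der: "\<forall>t\<in>{3/4..1}. (z has_real_derivative zd t) (at t)"
    and ode: "\<forall>t\<in>{3/4..<1}. t^2 * zd t - t*(1+3*t^2)/(1-t^2) * z t + t^2 * (z t)^2 = W t"
    and Wb: "\<forall>t\<in>{3/4..<1}. \<bar>W t\<bar> \<le> \<epsilon>"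
    and z1: "z 1 = 0"
  shows "\<forall>t\<in>{3/4..1}. \<bar>z t\<bar> \<le> 2*\<epsilon>*(1-t^2)"
proof -
  define B where "B = 2*\<epsilon>"
  have B: "0 < B" "B \<le> 10" using eps by (auto simp: B_def)
  define p where "p t = (1+3*t^2)/(t*(1-t^2))" for t :: real
  have zdE: "zd t = W t / t^2 + p t * z t - (z t)^2" if "t \<in> {3/4..<1}" for t
    using zd_eq[of t "zd t" "z t" "W t"] ode that by (auto simp: p_def)
  have WB: "\<bar>W t / t^2\<bar> \<le> B" if "t \<in> {3/4..<1}" for t
  proof -
    have "\<bar>W t / t^2\<bar> = \<bar>W t\<bar> * (1/t^2)" by (simp add: abs_divide)
    also have "\<dots> \<le> \<epsilon> * 2" using Wb that arith_t(4)[of t] by (intro mult_mono) auto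
    finally show ?thesis by (simp add: B_def)
  qed
  have WB': "- B \<le> W t / t^2 \<and> W t / t^2 \<le> B" if "t \<in> {3/4..<1}" for t
    using WB[OF that] unfolding abs_le_iff by linarith
  have pt: "p t * (1-t^2) = (1+3*t^2)/t" "3 \<le> (1+3*t^2)/t" "p t \<ge> 3" "(1-t^2)^2 \<le> 1/5" "0 < 1-t^2"
    if "t \<in> {3/4..<1}" for t
  proof -
    have a: "3/4 \<le> t" "t < 1" using that by auto
    note r = arith_t[OF a]
    show "p t * (1-t^2) = (1+3*t^2)/t" unfolding p_def by (rule r(6))
    show "3 \<le> (1+3*t^2)/t" by (rule r(1))
    show "p t \<ge> 3" unfolding p_def by (rule r(7))
    show "(1-t^2)^2 \<le> 1/5" by (rule r(3))
    show "0 < 1-t^2" by (rule r(5))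
  qed
  have cz: "continuous_on {3/4..1} z"
    using der by (meson DERIV_isCont continuous_at_imp_continuous_on)
  have B2: "B^2 * (1-t^2)^2 \<le> 2 * B" if "t \<in> {3/4..<1}" for t
  proof -
    have "B^2 * (1-t^2)^2 = B * (B * (1-t^2)^2)" by (simp add: power2_eq_square)
    also have "\<dots> \<le> B * (10 * (1/5))" using B pt(4)[OF that] by (intro mult_left_mono mult_mono) auto
    finally show ?thesis by simp
  qed
  have up: "\<forall>t\<in>{3/4..1}. z t - B*(1-t^2) \<le> 0"
  proof (rule crossing)
    show "(3/4::real) < 1" by simp
    show "continuous_on {3/4..1} (\<lambda>t. z t - B*(1-t^2))"
      by (intro continuous_intros cz)
    show "z 1 - B*(1-1^2) \<le> 0" using z1 by simp
  next
    fix t assume t: "t \<in> {3/4..<1::real}" and d0: "z t - B*(1-t^2) = 0"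
    have zt: "z t = B*(1-t^2)" using d0 by simp
    have dd: "((\<lambda>t. z t - B*(1-t^2)) has_real_derivative (zd t + 2*B*t)) (at t)"
      using der t by (auto intro!: derivative_eq_intros simp: algebra_simps)
    have "p t * z t = B * (p t * (1-t^2))" unfolding zt by (simp only: mult.left_commute)
    also have "\<dots> = B * ((1+3*t^2)/t)" using pt(1)[OF t] by simp
    finally have "p t * z t = B * ((1+3*t^2)/t)" .
    then have "zd t = W t / t^2 + B * ((1+3*t^2)/t) - B^2*(1-t^2)^2" using zdE[OF t] zt
      by (simp add: power_mult_distrib)
    moreover have "B * ((1+3*t^2)/t) \<ge> B * 3" using pt(2)[OF t] B by (intro mult_left_mono) auto
    moreover have "2*B*t \<ge> 2*B*(3/4)" using t B by (intro mult_left_mono) auto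
    moreover have "- B \<le> W t / t^2" using WB'[OF t] by simp
    ultimately have "zd t + 2*B*t > 0" using B2[OF t] B by linarith
    then show "\<exists>D>0. ((\<lambda>t. z t - B*(1-t^2)) has_real_derivative D) (at t)" using dd by blast
  next
    fix a' :: real assume a': "3/4 \<le> a'" "a' < 1"
    show "\<not> (\<forall>t\<in>{a'..<1}. z t - B*(1-t^2) > 0)"
    proof
      assume pos: "\<forall>t\<in>{a'..<1}. z t - B*(1-t^2) > 0"
      have "isCont z 1" using der DERIV_isCont by force
      then have "z \<midarrow>1\<rightarrow> 0" using z1 by (simp add: isCont_def)
      from LIM_D[OF this, of 1] obtain \<delta> where \<delta>: "\<delta> > 0" "\<forall>x. x \<noteq> 1 \<and> norm (x - 1) < \<delta> \<longrightarrow> norm (z x - 0) < 1"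
        by auto
      define t where "t = max a' (1 - \<delta>/2)"
      have t: "a' \<le> t" "t < 1" "1 - \<delta> < t" using a' \<delta> by (auto simp: t_def)
      obtain \<xi> where \<xi>: "t < \<xi>" "\<xi> < 1" "z 1 - z t = zd \<xi> * (1 - t)"
        using mvt_real[of t 1 z zd] t a' der by auto
      have \<xi>r: "\<xi> \<in> {3/4..<1}" "\<xi> \<in> {a'..<1}" using \<xi> t a' by auto
      have z\<xi>: "z \<xi> > B*(1-\<xi>^2)" using pos \<xi>r by auto
      have z\<xi>1: "z \<xi> < 1" using \<delta>(2)[rule_format, of \<xi>] \<xi> t by auto
      have bpos: "B*(1-\<xi>^2) > 0" using B pt(5)[OF \<xi>r(1)] by simp
      have "z \<xi> * (p \<xi> - z \<xi>) \<ge> z \<xi> * (p \<xi> / 2)"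
        using z\<xi> bpos z\<xi>1 pt(3)[OF \<xi>r(1)] by (intro mult_left_mono) auto
      moreover have "z \<xi> * (p \<xi> / 2) \<ge> B*(1-\<xi>^2) * (p \<xi> / 2)"
        using z\<xi> pt(3)[OF \<xi>r(1)] by (intro mult_right_mono) auto
      moreover have "B*(1-\<xi>^2) * (p \<xi> / 2) = B * ((1+3*\<xi>^2)/\<xi>) / 2"
      proof -
        have "B*(1-\<xi>^2) * (p \<xi> / 2) = B*(p \<xi>*(1-\<xi>^2))/2" by (simp add: field_simps)
        also have "\<dots> = B * ((1+3*\<xi>^2)/\<xi>) / 2" by (simp only: pt(1)[OF \<xi>r(1)])
        finally show ?thesis .
      qed
      moreover have "B * ((1+3*\<xi>^2)/\<xi>) \<ge> B * 3" using pt(2)[OF \<xi>r(1)] B by (intro mult_left_mono) auto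
      moreover have "zd \<xi> = W \<xi> / \<xi>^2 + z \<xi> * (p \<xi> - z \<xi>)" using zdE[OF \<xi>r(1)]
        by (simp add: algebra_simps power2_eq_square)
      ultimately have "zd \<xi> > 0" using WB'[OF \<xi>r(1)] B by (rule lin5)
      then have "z 1 - z t > 0" using \<xi> t by simp
      then have "z t < 0" using z1 by simp
      moreover have "z t > B*(1-t^2)" using pos t by auto
      moreover have "B*(1-t^2) > 0" using B pt(5)[of t] t a' by simp
      ultimately show False by simp
    qed
  qed
  have lo: "\<forall>t\<in>{3/4..1}. - z t - B*(1-t^2) \<le> 0"
  proof (rule crossing)
    show "(3/4::real) < 1" by simp
    show "continuous_on {3/4..1} (\<lambda>t. - z t - B*(1-t^2))"
      by (intro continuous_intros cz)
    show "- z 1 - B*(1-1^2) \<le> 0" using z1 by simp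
  next
    fix t assume t: "t \<in> {3/4..<1::real}" and d0: "- z t - B*(1-t^2) = 0"
    have zt: "z t = - (B*(1-t^2))" using d0 by simp
    have dd: "((\<lambda>t. - z t - B*(1-t^2)) has_real_derivative (- zd t + 2*B*t)) (at t)"
      using der t by (auto intro!: derivative_eq_intros simp: algebra_simps)
    have "p t * z t = - (B * (p t * (1-t^2)))" unfolding zt by (simp only: mult.left_commute mult_minus_right)
    also have "\<dots> = - (B * ((1+3*t^2)/t))" using pt(1)[OF t] by simp
    finally have "p t * z t = - (B * ((1+3*t^2)/t))" .
    then have "zd t = W t / t^2 - B * ((1+3*t^2)/t) - B^2*(1-t^2)^2" using zdE[OF t] zt
      by (simp add: power_mult_distrib)
    moreover have "B * ((1+3*t^2)/t) \<ge> B * 3" using pt(2)[OF t] B by (intro mult_left_mono) auto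
    moreover have "2*B*t \<ge> 0" using t B by simp
    moreover have "B^2*(1-t^2)^2 \<ge> 0" by simp
    ultimately have "- zd t + 2*B*t > 0" using WB'[OF t] B by linarith
    then show "\<exists>D>0. ((\<lambda>t. - z t - B*(1-t^2)) has_real_derivative D) (at t)" using dd by blast
  next
    fix a' :: real assume a': "3/4 \<le> a'" "a' < 1"
    show "\<not> (\<forall>t\<in>{a'..<1}. - z t - B*(1-t^2) > 0)"
    proof
      assume pos: "\<forall>t\<in>{a'..<1}. - z t - B*(1-t^2) > 0"
      obtain \<xi> where \<xi>: "a' < \<xi>" "\<xi> < 1" "z 1 - z a' = zd \<xi> * (1 - a')"
        using mvt_real[of a' 1 z zd] a' der by auto
      have \<xi>r: "\<xi> \<in> {3/4..<1}" "\<xi> \<in> {a'..<1}" using \<xi> a' by auto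
      have z\<xi>: "z \<xi> < - (B*(1-\<xi>^2))" using pos[rule_format, OF \<xi>r(2)] by linarith
      have "p \<xi> * z \<xi> \<le> p \<xi> * (- (B*(1-\<xi>^2)))"
        using z\<xi> pt(3)[OF \<xi>r(1)] by (intro mult_left_mono) auto
      moreover have "p \<xi> * (- (B*(1-\<xi>^2))) = - (B * ((1+3*\<xi>^2)/\<xi>))"
      proof -
        have "p \<xi> * (- (B*(1-\<xi>^2))) = - (B * (p \<xi>*(1-\<xi>^2)))" by (simp only: mult.left_commute mult_minus_right)
        also have "\<dots> = - (B * ((1+3*\<xi>^2)/\<xi>))" by (simp only: pt(1)[OF \<xi>r(1)])
        finally show ?thesis .
      qed
      moreover have "B * ((1+3*\<xi>^2)/\<xi>) \<ge> B * 3" using pt(2)[OF \<xi>r(1)] B by (intro mult_left_mono) auto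
      moreover have "(z \<xi>)^2 \<ge> 0" by simp
      ultimately have "zd \<xi> < 0" using zdE[OF \<xi>r(1)] WB'[OF \<xi>r(1)] B by linarith
      then have "z 1 - z a' < 0" using \<xi> a' by (simp add: mult_neg_pos)
      then have "z a' > 0" using z1 by simp
      moreover have "- z a' > B*(1-a'^2)" using pos a' by auto
      moreover have "B*(1-a'^2) > 0" using B pt(5)[of a'] a' by simp
      ultimately show False by simp
    qed
  qed
  show ?thesis
  proof
    fix t assume "t \<in> {3/4..1::real}"
    then show "\<bar>z t\<bar> \<le> 2*\<epsilon>*(1-t^2)" using up lo by (auto simp: B_def abs_le_iff)
  qed
qed



lemma lin88:
  fixes A P Q E R :: real
  shows "0\<le>A \<Longrightarrow> 0\<le>P \<Longrightarrow> 0\<le>Q \<Longrightarrow> 0\<le>E \<Longrightarrow> A\<le>144*E \<Longrightarrow> P\<le>64*E \<Longrightarrow> Q \<le> 64*E \<Longrightarrow> R \<le> 64*E \<Longrightarrow> -R \<le> 64*E \<Longrightarrow> \<bar>A/6 + (P+R+Q)/3\<bar> \<le> 88*E"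
  unfolding abs_le_iff add_divide_distrib minus_add_distrib by (intro conjI) linarith+

lemma S_bound:
  fixes Y a b e :: real
  assumes "\<bar>Y\<bar> \<le> 12*e" "\<bar>a\<bar> \<le> 8*e" "\<bar>b\<bar> \<le> 8*e"
  shows "\<bar>Y^2/6 + (a^2 + a*b + b^2)/3\<bar> \<le> 88 * e^2"
proof -
  have e: "e \<ge> 0" using assms by linarith
  have "Y^2 = \<bar>Y\<bar>^2" by simp
  also have "\<dots> \<le> (12*e)^2" using assms by (intro power_mono) auto
  finally have y: "Y^2 \<le> 144*e^2" by (simp add: power_mult_distrib)
  have "a^2 = \<bar>a\<bar>^2" by simp
  also have "\<dots> \<le> (8*e)^2" using assms by (intro power_mono) auto
  finally have a: "a^2 \<le> 64*e^2" by (simp add: power_mult_distrib)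
  have "b^2 = \<bar>b\<bar>^2" by simp
  also have "\<dots> \<le> (8*e)^2" using assms by (intro power_mono) auto
  finally have b: "b^2 \<le> 64*e^2" by (simp add: power_mult_distrib)
  have "\<bar>a*b\<bar> = \<bar>a\<bar>*\<bar>b\<bar>" by (simp add: abs_mult)
  also have "\<dots> \<le> (8*e)*(8*e)" using assms by (intro mult_mono) auto
  finally have ab: "\<bar>a*b\<bar> \<le> 64*e^2" by (simp add: power2_eq_square)
  have "0 \<le> Y^2" "0 \<le> a^2" "0 \<le> b^2" "0 \<le> e^2" by simp_all
  then show ?thesis using y a b ab lin88[of "Y^2" "a^2" "b^2" "e^2" "a*b"] by (simp add: abs_le_iff)
qed

lemma mu_deriv:
  fixes t :: real assumes "0 < t"
  shows "((\<lambda>s. (1-s^2)^2/s) has_real_derivative (-(1-t^2)*(1+3*t^2)/t^2)) (at t)"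
  using assms by (auto intro!: derivative_eq_intros simp: field_simps power2_eq_square)

lemma y1_bound:
  fixes Y Y2 a b :: "real \<Rightarrow> real" and \<epsilon> :: real
  assumes eps: "0 < \<epsilon>"
    and der: "\<forall>t\<in>{3/4..1}. (Y has_real_derivative Y2 t) (at t)"
    and ode: "\<forall>t\<in>{3/4..<1}. Y2 t - (1+3*t^2)/(t*(1-t^2)) * Y t + (Y t)^2/6 + ((a t)^2 + a t * b t + (b t)^2)/3 = 0"
    and bY: "\<forall>t\<in>{3/4..1}. \<bar>Y t\<bar> \<le> 12*(\<epsilon>*(1-t^2))"
    and ba: "\<forall>t\<in>{3/4..1}. \<bar>a t\<bar> \<le> 8*(\<epsilon>*(1-t^2))"
    and bb: "\<forall>t\<in>{3/4..1}. \<bar>b t\<bar> \<le> 8*(\<epsilon>*(1-t^2))"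
    and Y1: "Y 1 = 0"
  shows "\<forall>t\<in>{3/4..1}. \<bar>Y t\<bar> \<le> 200*\<epsilon>^2*(1-t^2)^3"
    and "\<forall>t\<in>{3/4..<1}. \<bar>Y2 t\<bar> \<le> 1100*\<epsilon>^2*(1-t^2)^2"
proof -
  define S where "S t = (Y t)^2/6 + ((a t)^2 + a t * b t + (b t)^2)/3" for t
  define p where "p t = (1+3*t^2)/(t*(1-t^2))" for t :: real
  define \<mu> where "\<mu> t = (1-t^2)^2/t" for t :: real
  define \<mu>d where "\<mu>d t = -(1-t^2)*(1+3*t^2)/t^2" for t :: real
  have Sb: "\<bar>S t\<bar> \<le> 88 * (\<epsilon>^2*(1-t^2)^2)" if "t \<in> {3/4..1}" for t
    using S_bound[of "Y t" "\<epsilon>*(1-t^2)" "a t" "b t"] bY ba bb that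
    by (simp add: S_def power_mult_distrib)
  have Y2E: "Y2 t = p t * Y t - S t" if "t \<in> {3/4..<1}" for t
    using ode that unfolding S_def p_def by (simp add: algebra_simps add_divide_distrib) 
  have pmu: "\<mu> t * p t = - \<mu>d t" if "t \<in> {3/4..<1}" for t
  proof -
    have "t > 0" "1 - t^2 \<noteq> 0" using that arith_t(5)[of t] by auto
    then show ?thesis unfolding \<mu>_def p_def \<mu>d_def by (simp add: field_simps power2_eq_square)
  qed
  have Fd: "((\<lambda>t. \<mu> t * Y t) has_real_derivative (\<mu>d t * Y t + \<mu> t * Y2 t)) (at t)" if "t \<in> {3/4..1}" for t
  proof -
    have "t > 0" using that by auto
    from DERIV_mult[OF mu_deriv[OF this] der[rule_format, OF that]] show ?thesis
      unfolding \<mu>_def \<mu>d_def by (simp add: ac_simps)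
  qed
  have Fd': "\<mu>d t * Y t + \<mu> t * Y2 t = - (\<mu> t * S t)" if "t \<in> {3/4..<1}" for t
  proof -
    have "\<mu> t * (p t * Y t) = - \<mu>d t * Y t" using pmu[OF that] by (metis mult.assoc)
    then show ?thesis unfolding Y2E[OF that] by (simp add: right_diff_distrib)
  qed
  have mub: "0 \<le> \<mu> t \<and> \<mu> t \<le> 2 * (1-t^2)^2" if "t \<in> {3/4..1}" for t
  proof -
    have t: "t \<ge> 3/4" "t \<le> 1" using that by auto
    have "(1-t^2)^2/t \<le> (1-t^2)^2/(1/2)" using t by (intro divide_left_mono) auto
    moreover have "0 \<le> (1-t^2)^2/t" using t by simp
    ultimately show ?thesis unfolding \<mu>_def by simp
  qed
  show Yb: "\<forall>t\<in>{3/4..1}. \<bar>Y t\<bar> \<le> 200*\<epsilon>^2*(1-t^2)^3"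
  proof
    fix x assume x: "x \<in> {3/4..1::real}"
    show "\<bar>Y x\<bar> \<le> 200*\<epsilon>^2*(1-x^2)^3"
    proof (cases "x = 1")
      case True then show ?thesis using Y1 by simp
    next
      case False
      then have x1: "3/4 \<le> x" "x < 1" using x by auto
      have s: "0 < 1 - x^2" using arith_t(5)[OF x1] .
      obtain \<xi> where \<xi>: "x < \<xi>" "\<xi> < 1" "\<mu> 1 * Y 1 - \<mu> x * Y x = (\<mu>d \<xi> * Y \<xi> + \<mu> \<xi> * Y2 \<xi>) * (1 - x)"
        using mvt_real[of x 1 "\<lambda>t. \<mu> t * Y t" "\<lambda>t. \<mu>d t * Y t + \<mu> t * Y2 t"] x1 Fd by auto
      have \<xi>r: "\<xi> \<in> {3/4..<1}" using \<xi> x1 by auto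
      have Fx: "\<mu> x * Y x = \<mu> \<xi> * S \<xi> * (1 - x)" using \<xi>(3) Fd'[OF \<xi>r] by (simp add: \<mu>_def)
      have \<sigma>: "0 \<le> 1 - \<xi>^2" "1 - \<xi>^2 \<le> 1 - x^2"
        using \<xi> x1 by (auto simp: power_le_one_iff abs_le_iff power_mono)
      have "\<bar>\<mu> x * Y x\<bar> = \<mu> \<xi> * \<bar>S \<xi>\<bar> * (1 - x)"
        unfolding Fx using mub[of \<xi>] \<xi>r \<xi> x1 by (simp add: abs_mult)
      also have "\<dots> \<le> (2 * (1-\<xi>^2)^2) * (88 * (\<epsilon>^2*(1-\<xi>^2)^2)) * (1 - x)"
        using mub[of \<xi>] Sb[of \<xi>] \<xi>r x1 by (intro mult_mono) auto
      also have "\<dots> = 176 * \<epsilon>^2 * ((1-\<xi>^2)^4) * (1 - x)" by algebra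
      also have "\<dots> \<le> 176 * \<epsilon>^2 * ((1-x^2)^4) * (1 - x^2)"
        using \<sigma> x1 eps by (intro mult_mono power_mono) (auto simp: power2_eq_square mult_le_cancel_left1)
      finally have F0: "\<bar>\<mu> x * Y x\<bar> \<le> 176 * \<epsilon>^2 * ((1-x^2)^4) * (1 - x^2)" .
      have p5: "(1-x^2)^5 = (1-x^2)^4 * (1 - x^2)" by (simp add: power_Suc2[symmetric])
      have F: "\<bar>\<mu> x * Y x\<bar> \<le> 176 * \<epsilon>^2 * (1-x^2)^5" using F0 unfolding p5 by (simp add: mult.assoc)
      have "\<bar>\<mu> x * Y x\<bar> = (1-x^2)^2/x * \<bar>Y x\<bar>" using x1 by (simp add: \<mu>_def abs_mult)
      moreover have "(1-x^2)^2/x \<ge> (1-x^2)^2" using x1 s by (simp add: le_divide_eq mult_le_cancel_left1)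
      ultimately have "(1-x^2)^2 * \<bar>Y x\<bar> \<le> 176 * \<epsilon>^2 * (1-x^2)^5"
      proof -
        have "(1-x^2)^2 * \<bar>Y x\<bar> \<le> (1-x^2)^2/x * \<bar>Y x\<bar>"
          using \<open>(1-x^2)^2/x \<ge> (1-x^2)^2\<close> by (rule mult_right_mono) simp
        then show ?thesis using F \<open>\<bar>\<mu> x * Y x\<bar> = (1-x^2)^2/x * \<bar>Y x\<bar>\<close> by linarith
      qed
      then have "(1-x^2)^2 * \<bar>Y x\<bar> \<le> (1-x^2)^2 * (176 * \<epsilon>^2 * (1-x^2)^3)"
        by (smt (verit) mult.commute mult.left_commute power_add numeral_plus_numeral semiring_norm(2) semiring_norm(5) numeral_Bit1 numeral_One)
      then have "\<bar>Y x\<bar> \<le> 176 * \<epsilon>^2 * (1-x^2)^3" using s by (simp add: mult_le_cancel_left)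
      then show ?thesis by simp
    qed
  qed
  show "\<forall>t\<in>{3/4..<1}. \<bar>Y2 t\<bar> \<le> 1100*\<epsilon>^2*(1-t^2)^2"
  proof
    fix t assume t: "t \<in> {3/4..<1::real}"
    have a: "3/4 \<le> t" "t < 1" using t by auto
    have s: "0 < 1 - t^2" using arith_t(5)[OF a] .
    have pt: "p t \<ge> 0" "p t * (1-t^2) \<le> 5" using arith_t[OF a] unfolding p_def by auto
    have "\<bar>p t * Y t\<bar> = p t * \<bar>Y t\<bar>" using pt by (simp add: abs_mult)
    also have "\<dots> \<le> p t * (200*\<epsilon>^2*(1-t^2)^3)" using Yb t pt by (intro mult_left_mono) auto
    also have "\<dots> = (p t * (1-t^2)) * (200*\<epsilon>^2*(1-t^2)^2)" by (simp add: algebra_simps power2_eq_square power3_eq_cube)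
    also have "\<dots> \<le> 5 * (200*\<epsilon>^2*(1-t^2)^2)" using pt by (intro mult_right_mono) auto
    finally have "\<bar>p t * Y t\<bar> \<le> 1000*\<epsilon>^2*(1-t^2)^2" by simp
    moreover have "\<bar>S t\<bar> \<le> 88 * (\<epsilon>^2*(1-t^2)^2)" using Sb t by auto
    moreover have "0 \<le> \<epsilon>^2*(1-t^2)^2" by simp
    ultimately show "\<bar>Y2 t\<bar> \<le> 1100*\<epsilon>^2*(1-t^2)^2" unfolding Y2E[OF t] by (simp add: abs_le_iff)
  qed
qed



definition zf :: "(real \<Rightarrow> real) \<Rightarrow> real \<Rightarrow> real" where
  "zf J s = deriv J s / (2 * J s)"

definition zdf :: "(real \<Rightarrow> real) \<Rightarrow> real \<Rightarrow> real" where
  "zdf J s = (deriv (deriv J) s * J s - (deriv J s)^2) / (2 * (J s)^2)"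

lemma zf_deriv: "smooth_fun J \<Longrightarrow> J t > 0 \<Longrightarrow> (zf J has_real_derivative zdf J t) (at t)"
  unfolding zf_def[abs_def] zdf_def
  using smooth_D0[of J t] smooth_D1[of J t]
  by (auto intro!: derivative_eq_intros simp: field_simps power2_eq_square)

lemma zdf_cont: "smooth_fun J \<Longrightarrow> J t > 0 \<Longrightarrow> isCont (zdf J) t"
  unfolding zdf_def[abs_def]
  using smooth_cont2[of J t] DERIV_isCont[OF smooth_D1[of J t]] DERIV_isCont[OF smooth_D0[of J t]]
  by (auto intro!: continuous_intros)

lemma dy1: "smooth_fun I1 \<Longrightarrow> smooth_fun I2 \<Longrightarrow> smooth_fun I3 \<Longrightarrow> I1 t > 0 \<Longrightarrow> I2 t > 0 \<Longrightarrow> I3 t > 0 \<Longrightarrow>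
  ((\<lambda>x. ln (Kf I1 I2 I3 x)) has_real_derivative 2 * (zf I1 t + zf I2 t + zf I3 t)) (at t)"
  unfolding Kf_def zf_def
  using smooth_D0[of I1 t] smooth_D0[of I2 t] smooth_D0[of I3 t]
  by (auto intro!: derivative_eq_intros simp: field_simps)

lemma dy2: "smooth_fun I1 \<Longrightarrow> smooth_fun I2 \<Longrightarrow> I1 t > 0 \<Longrightarrow> I2 t > 0 \<Longrightarrow>
  ((\<lambda>x. ln (phi1 I1 I2 x)) has_real_derivative 2 * (zf I2 t - zf I1 t)) (at t)"
  unfolding phi1_def zf_def
  using smooth_D0[of I1 t] smooth_D0[of I2 t]
  by (auto intro!: derivative_eq_intros simp: field_simps power2_eq_square)

lemma dy3: "smooth_fun I2 \<Longrightarrow> smooth_fun I3 \<Longrightarrow> I2 t > 0 \<Longrightarrow> I3 t > 0 \<Longrightarrow>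
  ((\<lambda>x. ln (phi2 I2 I3 x)) has_real_derivative 2 * (zf I3 t - zf I2 t)) (at t)"
  unfolding phi2_def zf_def
  using smooth_D0[of I2 t] smooth_D0[of I3 t]
  by (auto intro!: derivative_eq_intros simp: field_simps power2_eq_square)

lemma bound_at_1:
  fixes g h :: "real \<Rightarrow> real"
  assumes "isCont g 1" "isCont h 1" "\<forall>t\<in>{3/4..<1}. \<bar>g t\<bar> \<le> h t"
  shows "\<bar>g 1\<bar> \<le> h 1"
proof (rule tendsto_le[of "at_left 1"])
  show "at_left (1::real) \<noteq> bot" by simp
  show "((\<lambda>t. \<bar>g t\<bar>) \<longlongrightarrow> \<bar>g 1\<bar>) (at_left 1)"
    using assms(1) by (intro tendsto_intros) (simp add: isCont_def filterlim_at_split)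
  show "(h \<longlongrightarrow> h 1) (at_left 1)"
    using assms(2) by (simp add: isCont_def filterlim_at_split)
  show "\<forall>\<^sub>F x in at_left 1. \<bar>g x\<bar> \<le> h x"
    using eventually_at_left_real[of "3/4" 1] by (rule eventually_mono) (use assms(3) in auto)
qed

lemma zbound:
  fixes J :: "real \<Rightarrow> real" and \<epsilon> :: real
  assumes i: "i \<in> {1,2,3::nat}" and sm: "smooth_fun J" and pos: "\<forall>t\<in>{0..1}. J t > 0"
    and w: "warp I i = (\<lambda>s. (1-s^2)/(2 * s) * sqrt (J s))"
    and ric: "\<forall>x\<in>{0<..<1}. \<forall>b<4. \<forall>c<4. Ricc I b c x = -3 * kd b c"
    and wn: "\<forall>x\<in>{0<..<1}. weyl_norm I x \<le> \<epsilon>" and eps: "0 < \<epsilon>" "\<epsilon> \<le> 5"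
    and z1: "zf J 1 = 0"
  shows "\<forall>t\<in>{3/4..1}. \<bar>zf J t\<bar> \<le> 2*\<epsilon>*(1-t^2)" and "\<forall>t\<in>{3/4..1}. \<bar>zdf J t\<bar> \<le> 16*\<epsilon>"
proof -
  have der: "\<forall>t\<in>{3/4..1}. (zf J has_real_derivative zdf J t) (at t)"
    using zf_deriv[OF sm] pos by auto
  have ode: "\<forall>t\<in>{3/4..<1}. t^2 * zdf J t - t*(1+3*t^2)/(1-t^2) * zf J t + t^2 * (zf J t)^2 = Weyl I 0 i 0 i t"
  proof
    fix t assume t: "t \<in> {3/4..<1::real}"
    have "Weyl I 0 i 0 i t = t^2 * ((deriv (deriv J) t * J t - (deriv J t)^2) / (2 * (J t)^2))
            - t * (1 + 3*t^2) / (1 - t^2) * (deriv J t / (2 * J t)) + t^2 * (deriv J t / (2 * J t))^2"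
      by (rule weyl_formula[OF i _ _ sm _ w]) (use t pos ric in auto)
    then show "t^2 * zdf J t - t*(1+3*t^2)/(1-t^2) * zf J t + t^2 * (zf J t)^2 = Weyl I 0 i 0 i t"
      by (simp add: zf_def zdf_def)
  qed
  have Wb: "\<forall>t\<in>{3/4..<1}. \<bar>Weyl I 0 i 0 i t\<bar> \<le> \<epsilon>"
  proof
    fix t assume t: "t \<in> {3/4..<1::real}"
    have "\<bar>Weyl I 0 i 0 i t\<bar> \<le> weyl_norm I t" by (rule weyl_norm_ge) (use i in auto)
    also have "\<dots> \<le> \<epsilon>" using wn t by auto
    finally show "\<bar>Weyl I 0 i 0 i t\<bar> \<le> \<epsilon>" .
  qed
  show zb: "\<forall>t\<in>{3/4..1}. \<bar>zf J t\<bar> \<le> 2*\<epsilon>*(1-t^2)"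
    by (rule barrier[OF eps der ode Wb z1])
  have zd_lt: "\<bar>zdf J t\<bar> \<le> 16*\<epsilon>" if t: "t \<in> {3/4..<1}" for t
  proof -
    have a: "3/4 \<le> t" "t < 1" using t by auto
    note r = arith_t[OF a]
    define p where "p = (1+3*t^2)/(t*(1-t^2))"
    have e: "zdf J t = Weyl I 0 i 0 i t / t^2 + p * zf J t - (zf J t)^2"
      unfolding p_def by (rule zd_eq[OF a]) (use ode t in auto)
    have W2: "\<bar>Weyl I 0 i 0 i t / t^2\<bar> \<le> 2*\<epsilon>"
    proof -
      have "\<bar>Weyl I 0 i 0 i t / t^2\<bar> = \<bar>Weyl I 0 i 0 i t\<bar> * (1/t^2)" by (simp add: abs_divide)
      also have "\<dots> \<le> \<epsilon> * 2" using Wb t r(4) by (intro mult_mono) auto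
      finally show ?thesis by simp
    qed
    have zt: "\<bar>zf J t\<bar> \<le> 2*\<epsilon>*(1-t^2)" using zb t by auto
    have p0: "p \<ge> 0" "p * (1-t^2) \<le> 5" using r unfolding p_def by auto
    have "\<bar>p * zf J t\<bar> = p * \<bar>zf J t\<bar>" using p0 by (simp add: abs_mult)
    also have "\<dots> \<le> p * (2*\<epsilon>*(1-t^2))" using zt p0 by (intro mult_left_mono) auto
    also have "\<dots> = (p * (1-t^2)) * (2*\<epsilon>)" by (simp add: algebra_simps)
    also have "\<dots> \<le> 5 * (2*\<epsilon>)" using p0 eps by (intro mult_right_mono) auto
    finally have P: "\<bar>p * zf J t\<bar> \<le> 10*\<epsilon>" by simp
    have "(zf J t)^2 = \<bar>zf J t\<bar>^2" by simp
    also have "\<dots> \<le> (2*\<epsilon>*(1-t^2))^2" using zt by (intro power_mono) auto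
    also have "\<dots> = 4*\<epsilon>^2*(1-t^2)^2" by (simp add: power_mult_distrib)
    also have "\<dots> \<le> 4*\<epsilon>^2*(1/5)" using r(3) by (intro mult_left_mono) auto
    also have "\<dots> \<le> 4*\<epsilon>" using eps by (simp add: power2_eq_square)
    finally have Z: "(zf J t)^2 \<le> 4*\<epsilon>" .
    have "0 \<le> (zf J t)^2" by simp
    then show ?thesis unfolding e using W2 P Z unfolding abs_le_iff by (intro conjI) linarith+
  qed
  show "\<forall>t\<in>{3/4..1}. \<bar>zdf J t\<bar> \<le> 16*\<epsilon>"
  proof
    fix t assume t: "t \<in> {3/4..1::real}"
    show "\<bar>zdf J t\<bar> \<le> 16*\<epsilon>"
    proof (cases "t = 1")
      case True
      have "\<bar>zdf J 1\<bar> \<le> (\<lambda>_. 16*\<epsilon>) 1"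
        by (rule bound_at_1) (use zdf_cont[OF sm] pos zd_lt in auto)
      then show ?thesis using True by simp
    next
      case False then show ?thesis using zd_lt t by auto
    qed
  qed
qed



lemma tri3:
  fixes a b c e :: real
  assumes "\<bar>a\<bar> \<le> 2*e" "\<bar>b\<bar> \<le> 2*e" "\<bar>c\<bar> \<le> 2*e"
  shows "\<bar>2*(a+b+c)\<bar> \<le> 12*e" "\<bar>2*(b-a)\<bar> \<le> 8*e" "\<bar>2*(c-b)\<bar> \<le> 8*e"
  using assms by (auto simp: abs_le_iff distrib_left right_diff_distrib)

lemma mono_c:
  fixes u a c P :: real
  shows "\<bar>u\<bar> \<le> a * P \<Longrightarrow> 0 \<le> P \<Longrightarrow> a \<le> c \<Longrightarrow> \<bar>u\<bar> \<le> c * P"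
  by (meson mult_right_mono order_trans)

lemma funpow_deriv: "(deriv ^^ 1) f = deriv f" "(deriv ^^ 2) f = deriv (deriv f)"
  by (simp_all add: numeral_2_eq_2)

theorem lemma3p3:
  fixes \<delta>0 :: real
  assumes \<delta>0: "0 < \<delta>0" "\<delta>0 < 1"
  shows "\<exists>C::real. \<forall>(I1::real \<Rightarrow> real) (I2::real \<Rightarrow> real) (I3::real \<Rightarrow> real)
                       (lam1::real) (lam2::real) (lam3::real) (\<epsilon>::real)
                       (y1::real \<Rightarrow> real) (y2::real \<Rightarrow> real) (y3::real \<Rightarrow> real).
    (\<comment> \<open>conformal infinity data\<close>
     0 < lam1 \<and> 0 < lam2 \<and> 0 < lam3 \<and> lam1 \<noteq> lam2 \<and> lam2 \<noteq> lam3 \<and> lam1 \<noteq> lam3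
     \<comment> \<open>the coefficient functions\<close>
     \<and> smooth_fun I1 \<and> smooth_fun I2 \<and> smooth_fun I3
     \<and> (\<forall>x\<in>{0..1}. 0 < I1 x \<and> 0 < I2 x \<and> 0 < I3 x)
     \<and> I1 1 = 1 \<and> I2 1 = 1 \<and> I3 1 = 1
     \<and> y1 = (\<lambda>x. ln (Kf I1 I2 I3 x)) \<and> y2 = (\<lambda>x. ln (phi1 I1 I2 x)) \<and> y3 = (\<lambda>x. ln (phi2 I2 I3 x))
     \<comment> \<open>geometric properties of g: Einstein, non-positive sectional curvature\<close>
     \<and> (\<forall>x\<in>{0<..<1}. \<forall>b<4. \<forall>c<4. Ricc (Ivec I1 I2 I3) b c x = -3 * kd b c)
     \<and> (\<forall>x\<in>{0<..<1}. nonpos_sec (Ivec I1 I2 I3) x)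
     \<comment> \<open>consequences stated in the setting\<close>
     \<and> Kf I1 I2 I3 0 < 1
     \<and> (\<forall>x\<in>{0<..<1}.
          deriv (deriv y1) x - (1 + 3*x^2) / (x * (1 - x^2)) * deriv y1 x + (deriv y1 x)^2 / 6
          + ((deriv y2 x)^2 + deriv y2 x * deriv y3 x + (deriv y3 x)^2) / 3 = 0)
     \<and> (\<forall>x\<in>{0<..<1}.
          deriv (deriv y1) x - (5 + 7*x^2) / (x * (1 - x^2)) * deriv y1 x + (deriv y1 x)^2 / 2
          + 16 / (1 - x^2)^2 * (3 - Ups (Kf I1 I2 I3 x) (phi1 I1 I2 x) (phi2 I2 I3 x)) = 0)
     \<and> (\<forall>x\<in>{0<..<1}. (let K = Kf I1 I2 I3 x; p1 = phi1 I1 I2 x; p2 = phi2 I2 I3 x in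
          deriv (deriv y2) x - 2 * (1 + 2*x^2) / (x * (1 - x^2)) * deriv y2 x
          + deriv y1 x * deriv y2 x / 2
          + 32 / (1 - x^2)^2 * K powr (-1/3) *
            (p1 powr (2/3) * p2 powr (1/3) - p1 powr (-1/3) * p2 powr (1/3)
             - p1 powr (2/3) * p2 powr (-2/3) + p1 powr (-4/3) * p2 powr (-2/3)) = 0))
     \<and> (\<forall>x\<in>{0<..<1}. (let K = Kf I1 I2 I3 x; p1 = phi1 I1 I2 x; p2 = phi2 I2 I3 x in
          deriv (deriv y3) x - 2 * (1 + 2*x^2) / (x * (1 - x^2)) * deriv y3 x
          + deriv y1 x * deriv y3 x / 2
          + 32 / (1 - x^2)^2 * K powr (-1/3) *
            (p1 powr (-1/3) * p2 powr (1/3) - p1 powr (-1/3) * p2 powr (-2/3)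
             - p1 powr (2/3) * p2 powr (4/3) + p1 powr (2/3) * p2 powr (-2/3)) = 0))
     \<and> phi1 I1 I2 0 = lam2 / lam1 \<and> phi2 I2 I3 0 = lam3 / lam2
     \<and> deriv y1 0 = 0 \<and> deriv y2 0 = 0 \<and> deriv y3 0 = 0
     \<and> deriv y1 1 = 0 \<and> deriv y2 1 = 0 \<and> deriv y3 1 = 0
     \<comment> \<open>hypotheses of the lemma\<close>
     \<and> 0 < \<epsilon> \<and> \<epsilon> \<le> 2 * sqrt 6
     \<and> (\<forall>x\<in>{0<..<1}. weyl_norm (Ivec I1 I2 I3) x \<le> \<epsilon>)
     \<and> phi1 I1 I2 0 < 1 \<and> phi1 I1 I2 0 * phi2 I2 I3 0 < 1
     \<and> 1 < phi1 I1 I2 0 + phi1 I1 I2 0 * phi2 I2 I3 0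
     \<and> \<delta>0 \<le> phi1 I1 I2 0 \<and> \<delta>0 \<le> phi2 I2 I3 0)
    \<longrightarrow> (\<forall>k\<in>{1,2::nat}. \<forall>x\<in>{3/4..1::real}.
          \<bar>(deriv ^^ k) y1 x\<bar> \<le> C * \<epsilon>^2 * (1 - x^2)^(4 - k)
        \<and> \<bar>(deriv ^^ k) y2 x\<bar> \<le> C * \<epsilon> * (1 - x^2)^(2 - k)
        \<and> \<bar>(deriv ^^ k) y3 x\<bar> \<le> C * \<epsilon> * (1 - x^2)^(2 - k))"
  apply (rule exI[of _ 5000])
  apply (intro allI impI)
  subgoal premises H for I1 I2 I3 lam1 lam2 lam3 \<epsilon> y1 y2 y3
  proof -
    have sm1: "smooth_fun I1" and sm2: "smooth_fun I2" and sm3: "smooth_fun I3" using H by blast+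
    have pos: "\<forall>x\<in>{0..1}. 0 < I1 x \<and> 0 < I2 x \<and> 0 < I3 x" using H by blast
    have yd: "y1 = (\<lambda>x. ln (Kf I1 I2 I3 x))" "y2 = (\<lambda>x. ln (phi1 I1 I2 x))" "y3 = (\<lambda>x. ln (phi2 I2 I3 x))"
      using H by blast+
    have ric: "\<forall>x\<in>{0<..<1}. \<forall>b<4. \<forall>c<4. Ricc (Ivec I1 I2 I3) b c x = -3 * kd b c" using H by blast
    have ode1: "\<forall>x\<in>{0<..<1}.
          deriv (deriv y1) x - (1 + 3*x^2) / (x * (1 - x^2)) * deriv y1 x + (deriv y1 x)^2 / 6
          + ((deriv y2 x)^2 + deriv y2 x * deriv y3 x + (deriv y3 x)^2) / 3 = 0" using H by blast
    have d1: "deriv y1 1 = 0" "deriv y2 1 = 0" "deriv y3 1 = 0" using H by blast+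
    have eps0: "0 < \<epsilon>" "\<epsilon> \<le> 2 * sqrt 6" using H by blast+
    have wn: "\<forall>x\<in>{0<..<1}. weyl_norm (Ivec I1 I2 I3) x \<le> \<epsilon>" using H by blast
    have "sqrt 6 \<le> sqrt ((5/2)^2)" by (rule real_sqrt_le_mono) (simp add: power2_eq_square)
    then have "sqrt 6 \<le> 5/2" by simp
    then have eps: "0 < \<epsilon>" "\<epsilon> \<le> 5" using eps0 by auto
    define U where "U = {t. 0 < I1 t} \<inter> {t. 0 < I2 t} \<inter> {t. 0 < I3 t}"
    have cI: "continuous_on UNIV I1" "continuous_on UNIV I2" "continuous_on UNIV I3"
      using smooth_D0[OF sm1] smooth_D0[OF sm2] smooth_D0[OF sm3]
      by (meson DERIV_isCont continuous_at_imp_continuous_on)+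
    have oU: "open U" unfolding U_def
      by (intro open_Int open_Collect_less continuous_on_const cI)
    have U01: "\<And>t. t \<in> {0..1} \<Longrightarrow> t \<in> U" using pos by (auto simp: U_def)
    have Upos: "\<And>t. t \<in> U \<Longrightarrow> 0 < I1 t \<and> 0 < I2 t \<and> 0 < I3 t" by (auto simp: U_def)
    define Y where "Y t = 2 * (zf I1 t + zf I2 t + zf I3 t)" for t
    define A where "A t = 2 * (zf I2 t - zf I1 t)" for t
    define B where "B t = 2 * (zf I3 t - zf I2 t)" for t
    define Y2 where "Y2 t = 2 * (zdf I1 t + zdf I2 t + zdf I3 t)" for t
    define A2 where "A2 t = 2 * (zdf I2 t - zdf I1 t)" for t
    define B2 where "B2 t = 2 * (zdf I3 t - zdf I2 t)" for t
    have dyY: "deriv y1 t = Y t" "deriv y2 t = A t" "deriv y3 t = B t" if "t \<in> U" for t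
      using dy1[OF sm1 sm2 sm3, of t] dy2[OF sm1 sm2, of t] dy3[OF sm2 sm3, of t] Upos[OF that]
      unfolding yd Y_def A_def B_def by (auto intro: DERIV_imp_deriv)
    have dY: "(Y has_real_derivative Y2 t) (at t)" "(A has_real_derivative A2 t) (at t)"
      "(B has_real_derivative B2 t) (at t)" if "t \<in> U" for t
    proof -
      have z: "(zf I1 has_real_derivative zdf I1 t) (at t)" "(zf I2 has_real_derivative zdf I2 t) (at t)"
        "(zf I3 has_real_derivative zdf I3 t) (at t)"
        using zf_deriv[OF sm1] zf_deriv[OF sm2] zf_deriv[OF sm3] Upos[OF that] by auto
      show "(Y has_real_derivative Y2 t) (at t)"
        using DERIV_cmult[OF DERIV_add[OF DERIV_add[OF z(1) z(2)] z(3)], of 2]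
        unfolding Y_def[abs_def] Y2_def by simp
      show "(A has_real_derivative A2 t) (at t)"
        using DERIV_cmult[OF DERIV_diff[OF z(2) z(1)], of 2]
        unfolding A_def[abs_def] A2_def by simp
      show "(B has_real_derivative B2 t) (at t)"
        using DERIV_cmult[OF DERIV_diff[OF z(3) z(2)], of 2]
        unfolding B_def[abs_def] B2_def by simp
    qed
    have ddY: "deriv (deriv y1) t = Y2 t" "deriv (deriv y2) t = A2 t" "deriv (deriv y3) t = B2 t"
      if "t \<in> U" for t
    proof -
      have "(deriv y1 has_real_derivative Y2 t) (at t)"
        by (rule has_field_derivative_transform_within_open[OF dY(1)[OF that] oU that]) (simp add: dyY)
      then show "deriv (deriv y1) t = Y2 t" by (rule DERIV_imp_deriv)
      have "(deriv y2 has_real_derivative A2 t) (at t)"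
        by (rule has_field_derivative_transform_within_open[OF dY(2)[OF that] oU that]) (simp add: dyY)
      then show "deriv (deriv y2) t = A2 t" by (rule DERIV_imp_deriv)
      have "(deriv y3 has_real_derivative B2 t) (at t)"
        by (rule has_field_derivative_transform_within_open[OF dY(3)[OF that] oU that]) (simp add: dyY)
      then show "deriv (deriv y3) t = B2 t" by (rule DERIV_imp_deriv)
    qed
    have U1: "(1::real) \<in> U" using U01 by auto
    have zz: "zf I1 1 + zf I2 1 + zf I3 1 = 0" "zf I2 1 = zf I1 1" "zf I3 1 = zf I2 1"
      using d1 dyY[OF U1] unfolding Y_def A_def B_def by simp_all
    have z1: "zf I1 1 = 0" "zf I2 1 = 0" "zf I3 1 = 0" using zz by linarith+
    have wI: "warp (Ivec I1 I2 I3) 1 = (\<lambda>s. (1-s^2)/(2 * s) * sqrt (I1 s))"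
      "warp (Ivec I1 I2 I3) 2 = (\<lambda>s. (1-s^2)/(2 * s) * sqrt (I2 s))"
      "warp (Ivec I1 I2 I3) 3 = (\<lambda>s. (1-s^2)/(2 * s) * sqrt (I3 s))"
      by (simp_all add: warp_def Ivec_def fun_eq_iff)
    have p1: "\<forall>t\<in>{0..1}. I1 t > 0" and p2: "\<forall>t\<in>{0..1}. I2 t > 0" and p3: "\<forall>t\<in>{0..1}. I3 t > 0"
      using pos by auto
    note zb1 = zbound[of 1 I1 "Ivec I1 I2 I3" \<epsilon>, OF _ sm1 p1 wI(1) ric wn eps z1(1)]
    note zb2 = zbound[of 2 I2 "Ivec I1 I2 I3" \<epsilon>, OF _ sm2 p2 wI(2) ric wn eps z1(2)]
    note zb3 = zbound[of 3 I3 "Ivec I1 I2 I3" \<epsilon>, OF _ sm3 p3 wI(3) ric wn eps z1(3)]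
    have zb: "\<bar>zf I1 t\<bar> \<le> 2*\<epsilon>*(1-t^2)" "\<bar>zf I2 t\<bar> \<le> 2*\<epsilon>*(1-t^2)" "\<bar>zf I3 t\<bar> \<le> 2*\<epsilon>*(1-t^2)"
      "\<bar>zdf I1 t\<bar> \<le> 16*\<epsilon>" "\<bar>zdf I2 t\<bar> \<le> 16*\<epsilon>" "\<bar>zdf I3 t\<bar> \<le> 16*\<epsilon>"
      if "t \<in> {3/4..1}" for t
      using zb1 zb2 zb3 that by auto
    have tt: "\<bar>Y t\<bar> \<le> 12*(\<epsilon>*(1-t^2)) \<and> \<bar>A t\<bar> \<le> 8*(\<epsilon>*(1-t^2)) \<and> \<bar>B t\<bar> \<le> 8*(\<epsilon>*(1-t^2))"
      if t: "t \<in> {3/4..1}" for t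
    proof -
      have "\<bar>zf I1 t\<bar> \<le> 2*(\<epsilon>*(1-t^2))" "\<bar>zf I2 t\<bar> \<le> 2*(\<epsilon>*(1-t^2))" "\<bar>zf I3 t\<bar> \<le> 2*(\<epsilon>*(1-t^2))"
        using zb(1-3)[OF t] by (simp_all only: mult.assoc)
      from tri3[OF this] show ?thesis unfolding Y_def A_def B_def by simp
    qed
    have yb: "\<forall>t\<in>{3/4..1}. \<bar>Y t\<bar> \<le> 200*\<epsilon>^2*(1-t^2)^3"
      and y2b: "\<forall>t\<in>{3/4..<1}. \<bar>Y2 t\<bar> \<le> 1100*\<epsilon>^2*(1-t^2)^2"
    proof -
      have der: "\<forall>t\<in>{3/4..1}. (Y has_real_derivative Y2 t) (at t)" using dY U01 by auto
      have ode: "\<forall>t\<in>{3/4..<1}. Y2 t - (1+3*t^2)/(t*(1-t^2)) * Y t + (Y t)^2/6 + ((A t)^2 + A t * B t + (B t)^2)/3 = 0"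
      proof
        fix t assume t: "t \<in> {3/4..<1::real}"
        then have tU: "t \<in> U" using U01 by auto
        show "Y2 t - (1+3*t^2)/(t*(1-t^2)) * Y t + (Y t)^2/6 + ((A t)^2 + A t * B t + (B t)^2)/3 = 0"
        proof -
          have "t \<in> {0<..<1}" using t by auto
          from ode1[rule_format, OF this] show ?thesis unfolding dyY[OF tU] ddY[OF tU] .
        qed
      qed
      have bY: "\<forall>t\<in>{3/4..1}. \<bar>Y t\<bar> \<le> 12*(\<epsilon>*(1-t^2))" using tt by blast
      have ba: "\<forall>t\<in>{3/4..1}. \<bar>A t\<bar> \<le> 8*(\<epsilon>*(1-t^2))" using tt by blast
      have bb: "\<forall>t\<in>{3/4..1}. \<bar>B t\<bar> \<le> 8*(\<epsilon>*(1-t^2))" using tt by blast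
      have Y1: "Y 1 = 0" using z1 by (simp add: Y_def)
      show "\<forall>t\<in>{3/4..1}. \<bar>Y t\<bar> \<le> 200*\<epsilon>^2*(1-t^2)^3"
        and "\<forall>t\<in>{3/4..<1}. \<bar>Y2 t\<bar> \<le> 1100*\<epsilon>^2*(1-t^2)^2"
        using y1_bound[OF eps(1) der ode bY ba bb Y1] by auto
    qed
    have y2b1: "\<bar>Y2 1\<bar> \<le> 0"
    proof -
      have "isCont Y2 1" unfolding Y2_def[abs_def]
        using zdf_cont[OF sm1, of 1] zdf_cont[OF sm2, of 1] zdf_cont[OF sm3, of 1] pos
        by (auto intro!: continuous_intros)
      then have "\<bar>Y2 1\<bar> \<le> (\<lambda>t. 1100*\<epsilon>^2*(1-t^2)^2) 1"
        by (rule bound_at_1) (use y2b in auto)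
      then show ?thesis by simp
    qed
    show ?thesis
    proof (intro ballI)
      fix k :: nat and x :: real assume k: "k \<in> {1,2}" and x: "x \<in> {3/4..1}"
      have xU: "x \<in> U" using x U01 by auto
      have s: "0 \<le> 1 - x^2" using x by (simp add: power_le_one)
      have e2: "0 \<le> \<epsilon>^2 * (1-x^2)^3" "0 \<le> \<epsilon>^2 * (1-x^2)^2" "0 \<le> \<epsilon> * (1-x^2)" using s eps by simp_all
      have bY1: "\<bar>Y x\<bar> \<le> 200 * (\<epsilon>^2*(1-x^2)^3)" using yb x by (simp add: mult.assoc)
      have bY2: "\<bar>Y2 x\<bar> \<le> 1100 * (\<epsilon>^2*(1-x^2)^2)"
      proof (cases "x = 1")
        case True then show ?thesis using y2b1 by simp
      next
        case False then show ?thesis using y2b x by (simp add: mult.assoc)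
      qed
      have bA: "\<bar>A x\<bar> \<le> 8 * (\<epsilon>*(1-x^2))" "\<bar>B x\<bar> \<le> 8 * (\<epsilon>*(1-x^2))" using tt[OF x] by auto
      have bA2: "\<bar>A2 x\<bar> \<le> 64 * \<epsilon>" "\<bar>B2 x\<bar> \<le> 64 * \<epsilon>"
        using zb(4-6)[OF x] unfolding A2_def B2_def by (auto simp: abs_le_iff right_diff_distrib)
      show "\<bar>(deriv ^^ k) y1 x\<bar> \<le> 5000 * \<epsilon>^2 * (1 - x^2)^(4 - k) \<and>
            \<bar>(deriv ^^ k) y2 x\<bar> \<le> 5000 * \<epsilon> * (1 - x^2)^(2 - k) \<and>
            \<bar>(deriv ^^ k) y3 x\<bar> \<le> 5000 * \<epsilon> * (1 - x^2)^(2 - k)"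
      proof (cases "k = 1")
        case True
        have "\<bar>Y x\<bar> \<le> 5000 * (\<epsilon>^2*(1-x^2)^3)" by (rule mono_c[OF bY1 e2(1)]) simp
        moreover have "\<bar>A x\<bar> \<le> 5000 * (\<epsilon>*(1-x^2))" by (rule mono_c[OF bA(1) e2(3)]) simp
        moreover have "\<bar>B x\<bar> \<le> 5000 * (\<epsilon>*(1-x^2))" by (rule mono_c[OF bA(2) e2(3)]) simp
        ultimately show ?thesis using True
          by (simp add: mult.assoc dyY[OF xU])
      next
        case False
        then have k2: "k = 2" using k by auto
        have "\<bar>Y2 x\<bar> \<le> 5000 * (\<epsilon>^2*(1-x^2)^2)" by (rule mono_c[OF bY2 e2(2)]) simp
        moreover have "\<bar>A2 x\<bar> \<le> 5000 * \<epsilon>" using bA2 eps by linarith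
        moreover have "\<bar>B2 x\<bar> \<le> 5000 * \<epsilon>" using bA2 eps by linarith
        ultimately show ?thesis using k2
          by (simp add: mult.assoc ddY[OF xU] funpow_deriv)
      qed
    qed
  qed
  done


end
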